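(* Let $\mathcal{D}[t]\subset\mathcal{H}\subset\mathcal{D}^\times[t^\times]$ be a rigged Hilbert space with $\mathcal{D}[t]$ complete and reflexive. A sequence $\{\zeta_n\}$ of elements of $\mathcal{D}^\times$ is Bessel-like if and only if, for every orthonormal basis $\{e_n\}$ of $\mathcal{H}$, there exists $W\in\mathcal{C}(\mathcal{H},\mathcal{D}^\times)$ such that $We_n=\zeta_n$ for every $n\in\mathbb{N}$ (here $W$ denotes its continuous extension to $\mathcal{H}$).
   Context: A rigged Hilbert space $\mathcal{D}[t]\subset\mathcal{H}\subset\mathcal{D}^\times[t^\times]$: $\mathcal{D}$ is a dense subspace of the Hilbert space $\mathcal{H}$ with a locally convex topology $t$ finer than the norm topology, $\mathcal{D}^\times$ is the space of continuous conjugate-linear functionals on $\mathcal{D}[t]$ with the strong dual topology $t^\times=\beta(\mathcal{D}^\times,\mathcal{D})$, $\mathcal{H}\subset\mathcal{D}^\times$, and the duality form $\langle\Phi,\eta\rangle$ (value of $\Phi\in\mathcal{D}^\times$ at $\eta\in\mathcal{D}$) extends the inner product. $\mathcal{L}(\mathcal{D},\mathcal{D}^\times)$ denotes the continuous linear maps from $\mathcal{D}[t]$ into $\mathcal{D}^\times[t^\times]$. For $\mathcal{E},\mathcal{F}\in\{\mathcal{D},\mathcal{H},\mathcal{D}^\times\}$ (with their respective topologies $t$, norm, $t^\times$), $\mathcal{C}(\mathcal{E},\mathcal{F})$ is the set of $X\in\mathcal{L}(\mathcal{D},\mathcal{D}^\times)$ for which there exists a continuous linear map $Y:\mathcal{E}\to\mathcal{F}$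 with $Y\xi=X\xi$ for all $\xi\in\mathcal{D}$; $X$ is identified with $Y$. A sequence $\{\zeta_n\}\subset\mathcal{D}^\times$ is Bessel-like if for every bounded subset $\mathcal{M}$ of $\mathcal{D}[t]$, $\sup_{\eta\in\mathcal{M}}\sum_{k=1}^\infty|\langle\zeta_k,\eta\rangle|^2<\infty$. *)

theory Defs
  imports Complex_Main
begin

definition hnorm :: "('h \<Rightarrow> 'h \<Rightarrow> complex) \<Rightarrow> 'h \<Rightarrow> real" where
  "hnorm ip x = sqrt (Re (ip x x))"

definition cHilbert ::
  "(complex \<Rightarrow> 'h::ab_group_add \<Rightarrow> 'h) \<Rightarrow> ('h \<Rightarrow> 'h \<Rightarrow> complex) \<Rightarrow> bool" where
  "cHilbert sc ip \<longleftrightarrow>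
     (\<forall>x. sc 1 x = x) \<and>
     (\<forall>a b x. sc a (sc b x) = sc (a * b) x) \<and>
     (\<forall>a b x. sc (a + b) x = sc a x + sc b x) \<and>
     (\<forall>a x y. sc a (x + y) = sc a x + sc a y) \<and>
     (\<forall>x y z. ip (x + y) z = ip x z + ip y z) \<and>
     (\<forall>a x y. ip (sc a x) y = a * ip x y) \<and>
     (\<forall>x y. ip x y = cnj (ip y x)) \<and>
     (\<forall>x. Im (ip x x) = 0 \<and> Re (ip x x) \<ge> 0) \<and>
     (\<forall>x. ip x x = 0 \<longrightarrow> x = 0) \<and>
     (\<forall>X::nat \<Rightarrow> 'h. (\<forall>\<epsilon>>0. \<exists>N. \<forall>m\<ge>N. \<forall>n\<ge>N. hnorm ip (X m - X n) < \<epsilon>)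
        \<longrightarrow> (\<exists>l. (\<lambda>n. hnorm ip (X n - l)) \<longlonglongrightarrow> 0))"

definition onb :: "('h::ab_group_add \<Rightarrow> 'h \<Rightarrow> complex) \<Rightarrow> (nat \<Rightarrow> 'h) \<Rightarrow> bool" where
  "onb ip e \<longleftrightarrow> (\<forall>i j. ip (e i) (e j) = (if i = j then 1 else 0)) \<and>
                  (\<forall>x. (\<forall>n. ip x (e n) = 0) \<longrightarrow> x = 0)"

definition seminorm_on ::
  "(complex \<Rightarrow> 'h::ab_group_add \<Rightarrow> 'h) \<Rightarrow> 'h set \<Rightarrow> ('h \<Rightarrow> real) \<Rightarrow> bool" where
  "seminorm_on sc D p \<longleftrightarrow>
     (\<forall>x\<in>D. p x \<ge> 0) \<and> (\<forall>x\<in>D. \<forall>y\<in>D. p (x + y) \<le> p x + p y) \<and>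
     (\<forall>a. \<forall>x\<in>D. p (sc a x) = cmod a * p x)"

definition bnd :: "'h set \<Rightarrow> ('h \<Rightarrow> real) set \<Rightarrow> 'h set \<Rightarrow> bool" where
  "bnd D S M \<longleftrightarrow> M \<subseteq> D \<and> (\<forall>p\<in>S. \<exists>C. \<forall>x\<in>M. p x \<le> C)"

text \<open>The conjugate dual D^x: continuous conjugate-linear functionals on D[t]
  (represented extensionally, i.e. vanishing outside D).\<close>
definition dualx ::
  "(complex \<Rightarrow> 'h::ab_group_add \<Rightarrow> 'h) \<Rightarrow> 'h set \<Rightarrow> ('h \<Rightarrow> real) set \<Rightarrow> ('h \<Rightarrow> complex) set" where
  "dualx sc D S = {\<Phi>. (\<forall>x. x \<notin> D \<longrightarrow> \<Phi> x = 0) \<and>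
      (\<forall>x\<in>D. \<forall>y\<in>D. \<Phi> (x + y) = \<Phi> x + \<Phi> y) \<and>
      (\<forall>a. \<forall>x\<in>D. \<Phi> (sc a x) = cnj a * \<Phi> x) \<and>
      (\<exists>F C. F \<subseteq> S \<and> finite F \<and> (\<forall>x\<in>D. cmod (\<Phi> x) \<le> C * (\<Sum>p\<in>F. p x)))}"

text \<open>Seminorms generating the strong dual topology t^x = beta(D^x, D).\<close>
definition strong_sn :: "'h set \<Rightarrow> ('h \<Rightarrow> real) set \<Rightarrow> (('h \<Rightarrow> complex) \<Rightarrow> real) set" where
  "strong_sn D S = {(\<lambda>\<Phi>. SUP \<eta>\<in>M. cmod (\<Phi> \<eta>)) | M. bnd D S M \<and> M \<noteq> {}}"

definition emb :: "('h \<Rightarrow> 'h \<Rightarrow> complex) \<Rightarrow> 'h set \<Rightarrow> 'h \<Rightarrow> ('h \<Rightarrow> complex)" where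
  "emb ip D \<xi> = (\<lambda>\<eta>. if \<eta> \<in> D then ip \<xi> \<eta> else 0)"

definition rigged ::
  "(complex \<Rightarrow> 'h::ab_group_add \<Rightarrow> 'h) \<Rightarrow> ('h \<Rightarrow> 'h \<Rightarrow> complex) \<Rightarrow> 'h set \<Rightarrow> ('h \<Rightarrow> real) set \<Rightarrow> bool" where
  "rigged sc ip D S \<longleftrightarrow>
     cHilbert sc ip \<and>
     0 \<in> D \<and> (\<forall>x\<in>D. \<forall>y\<in>D. x + y \<in> D) \<and> (\<forall>a. \<forall>x\<in>D. sc a x \<in> D) \<and>
     (\<forall>x. \<forall>\<epsilon>>0. \<exists>d\<in>D. hnorm ip (x - d) < \<epsilon>) \<and>
     (\<forall>p\<in>S. seminorm_on sc D p) \<and>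
     (\<exists>F C. F \<subseteq> S \<and> finite F \<and> (\<forall>x\<in>D. hnorm ip x \<le> C * (\<Sum>p\<in>F. p x)))"

definition lcs_complete :: "'h::ab_group_add set \<Rightarrow> ('h \<Rightarrow> real) set \<Rightarrow> bool" where
  "lcs_complete D S \<longleftrightarrow>
     (\<forall>F. F \<noteq> bot \<and> eventually (\<lambda>x. x \<in> D) F \<and>
          (\<forall>p\<in>S. \<forall>\<epsilon>>0. eventually (\<lambda>(x, y). p (x - y) < \<epsilon>) (F \<times>\<^sub>F F))
        \<longrightarrow> (\<exists>x\<in>D. \<forall>p\<in>S. \<forall>\<epsilon>>0. eventually (\<lambda>y. p (y - x) < \<epsilon>) F))"

definition bnd_dual ::
  "(complex \<Rightarrow> 'h::ab_group_add \<Rightarrow> 'h) \<Rightarrow> 'h set \<Rightarrow> ('h \<Rightarrow> real) set \<Rightarrow> ('h \<Rightarrow> complex) set \<Rightarrow> bool" where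
  "bnd_dual sc D S B \<longleftrightarrow> B \<subseteq> dualx sc D S \<and> (\<forall>q\<in>strong_sn D S. \<exists>C. \<forall>\<Phi>\<in>B. q \<Phi> \<le> C)"

text \<open>Reflexivity of D[t]: the canonical map into the strong bidual
  (continuous conjugate-linear functionals on D^x[t^x]) is onto, and t coincides
  with the strong topology beta(D, D^x).\<close>
definition reflexive_lcs ::
  "(complex \<Rightarrow> 'h::ab_group_add \<Rightarrow> 'h) \<Rightarrow> 'h set \<Rightarrow> ('h \<Rightarrow> real) set \<Rightarrow> bool" where
  "reflexive_lcs sc D S \<longleftrightarrow>
     (\<forall>G :: ('h \<Rightarrow> complex) \<Rightarrow> complex.
        (\<forall>\<Phi>\<in>dualx sc D S. \<forall>\<Psi>\<in>dualx sc D S. G (\<lambda>\<eta>. \<Phi> \<eta> + \<Psi> \<eta>) = G \<Phi> + G \<Psi>) \<and>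
        (\<forall>a. \<forall>\<Phi>\<in>dualx sc D S. G (\<lambda>\<eta>. a * \<Phi> \<eta>) = cnj a * G \<Phi>) \<and>
        (\<exists>Q C. Q \<subseteq> strong_sn D S \<and> finite Q \<and>
           (\<forall>\<Phi>\<in>dualx sc D S. cmod (G \<Phi>) \<le> C * (\<Sum>q\<in>Q. q \<Phi>)))
        \<longrightarrow> (\<exists>\<eta>\<in>D. \<forall>\<Phi>\<in>dualx sc D S. G \<Phi> = cnj (\<Phi> \<eta>))) \<and>
     (let R = {(\<lambda>\<eta>. SUP \<Phi>\<in>B. cmod (\<Phi> \<eta>)) | B. bnd_dual sc D S B \<and> B \<noteq> {}} in
        (\<forall>p\<in>S. \<exists>Q C. Q \<subseteq> R \<and> finite Q \<and> (\<forall>x\<in>D. p x \<le> C * (\<Sum>r\<in>Q. r x))) \<and>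
        (\<forall>r\<in>R. \<exists>F C. F \<subseteq> S \<and> finite F \<and> (\<forall>x\<in>D. r x \<le> C * (\<Sum>p\<in>F. p x))))"

definition bessel_like ::
  "'h set \<Rightarrow> ('h \<Rightarrow> real) set \<Rightarrow> (nat \<Rightarrow> ('h \<Rightarrow> complex)) \<Rightarrow> bool" where
  "bessel_like D S \<zeta> \<longleftrightarrow>
     (\<forall>M. bnd D S M \<longrightarrow>
        (\<exists>B. \<forall>\<eta>\<in>M. summable (\<lambda>k. (cmod (\<zeta> k \<eta>))\<^sup>2) \<and> (\<Sum>k. (cmod (\<zeta> k \<eta>))\<^sup>2) \<le> B))"

definition Lop ::
  "(complex \<Rightarrow> 'h::ab_group_add \<Rightarrow> 'h) \<Rightarrow> 'h set \<Rightarrow> ('h \<Rightarrow> real) set \<Rightarrow> ('h \<Rightarrow> ('h \<Rightarrow> complex)) set" where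
  "Lop sc D S = {X. (\<forall>x\<in>D. X x \<in> dualx sc D S) \<and>
      (\<forall>x\<in>D. \<forall>y\<in>D. X (x + y) = (\<lambda>\<eta>. X x \<eta> + X y \<eta>)) \<and>
      (\<forall>a. \<forall>x\<in>D. X (sc a x) = (\<lambda>\<eta>. a * X x \<eta>)) \<and>
      (\<forall>q\<in>strong_sn D S. \<exists>F C. F \<subseteq> S \<and> finite F \<and>
          (\<forall>x\<in>D. q (X x) \<le> C * (\<Sum>p\<in>F. p x)))}"

text \<open>Y is a continuous linear map H \<rightarrow> D^x[t^x] extending X (so X \<in> C(H, D^x)
  when X \<in> L(D, D^x) and such a Y exists; X is identified with Y).\<close>
definition CHext ::
  "(complex \<Rightarrow> 'h::ab_group_add \<Rightarrow> 'h) \<Rightarrow> ('h \<Rightarrow> 'h \<Rightarrow> complex) \<Rightarrow> 'h set \<Rightarrow> ('h \<Rightarrow> real) set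
    \<Rightarrow> ('h \<Rightarrow> ('h \<Rightarrow> complex)) \<Rightarrow> ('h \<Rightarrow> ('h \<Rightarrow> complex)) \<Rightarrow> bool" where
  "CHext sc ip D S X Y \<longleftrightarrow>
     (\<forall>x. Y x \<in> dualx sc D S) \<and>
     (\<forall>x y. Y (x + y) = (\<lambda>\<eta>. Y x \<eta> + Y y \<eta>)) \<and>
     (\<forall>a x. Y (sc a x) = (\<lambda>\<eta>. a * Y x \<eta>)) \<and>
     (\<forall>q\<in>strong_sn D S. \<exists>C. \<forall>x. q (Y x) \<le> C * hnorm ip x) \<and>
     (\<forall>\<xi>\<in>D. Y \<xi> = X \<xi>)"

end

theory Submission
  imports Defs "HOL-Analysis.L2_Norm"
begin


locale hil =
  fixes sc :: "complex \<Rightarrow> 'h::ab_group_add \<Rightarrow> 'h" and ip :: "'h \<Rightarrow> 'h \<Rightarrow> complex"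
  assumes H: "cHilbert sc ip"
begin

lemma ip_add_left: "ip (x + y) z = ip x z + ip y z" using H unfolding cHilbert_def by blast
lemma ip_sc_left: "ip (sc a x) y = a * ip x y" using H unfolding cHilbert_def by blast
lemma ip_cnj: "ip x y = cnj (ip y x)" using H unfolding cHilbert_def by blast
lemma ip_add_right: "ip z (x + y) = ip z x + ip z y"
  by (metis ip_cnj ip_add_left complex_cnj_add)
lemma ip_sc_right: "ip x (sc a y) = cnj a * ip x y"
  by (metis ip_cnj ip_sc_left complex_cnj_mult)
lemma ip_zero_left[simp]: "ip 0 y = 0"
  using ip_add_left[of 0 0 y] by simp
lemma ip_zero_right[simp]: "ip y 0 = 0"
  using ip_add_right[of y 0 0] by simp
lemma ip_sum_left: "ip (\<Sum>i\<in>A. f i) y = (\<Sum>i\<in>A. ip (f i) y)"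
  by (induction A rule: infinite_finite_induct) (auto simp: ip_add_left)
lemma ip_self_nonneg: "Im (ip x x) = 0" "Re (ip x x) \<ge> 0" using H unfolding cHilbert_def by blast+
lemma ip_def0: "ip x x = 0 \<Longrightarrow> x = 0" using H unfolding cHilbert_def by blast
lemma ip_minus_left: "ip (- x) y = - ip x y"
proof -
  have "ip x y + ip (- x) y = 0" using ip_add_left[of x "-x" y] by simp
  then show ?thesis by (simp add: eq_neg_iff_add_eq_0 add.commute)
qed
lemma ip_diff_left: "ip (x - y) z = ip x z - ip y z"
  using ip_add_left[of x "-y" z] ip_minus_left[of y z] by simp
lemma ip_diff_right: "ip z (x - y) = ip z x - ip z y"
  by (metis ip_cnj ip_diff_left complex_cnj_diff)
lemma ip_self_real: "ip x x = complex_of_real (Re (ip x x))"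
  using ip_self_nonneg(1)[of x] by (simp add: complex_eq_iff)
lemma hnorm_sq: "(hnorm ip x)\<^sup>2 = Re (ip x x)"
  unfolding hnorm_def by (metis ip_self_nonneg(2) real_sqrt_pow2)
lemma hnorm_nonneg: "hnorm ip x \<ge> 0" unfolding hnorm_def using ip_self_nonneg(2)[of x] by simp
lemma hnorm_zero: "hnorm ip x = 0 \<Longrightarrow> x = 0"
  unfolding hnorm_def using ip_self_real[of x] ip_def0[of x] by (metis of_real_0 real_sqrt_eq_zero_cancel_iff)

context
  fixes e :: "nat \<Rightarrow> 'h"
  assumes ortho: "\<forall>i j. ip (e i) (e j) = (if i = j then 1 else 0)"
begin

lemma comb_coeff: "ip (\<Sum>n<N. sc (a n) (e n)) (e m) = (if m < N then a m else 0)"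
proof -
  have "ip (\<Sum>n<N. sc (a n) (e n)) (e m) = (\<Sum>n<N. a n * (if n = m then 1 else 0))"
    by (simp add: ip_sum_left ip_sc_left ortho)
  also have "\<dots> = (if m < N then a m else 0)"
    by (simp add: if_distrib[of "\<lambda>x. _ * x"] sum.delta' cong: if_cong)
  finally show ?thesis .
qed

lemma comb_norm: "ip (\<Sum>n<N. sc (a n) (e n)) (\<Sum>n<N. sc (a n) (e n)) = (\<Sum>n<N. complex_of_real ((cmod (a n))\<^sup>2))"
proof -
  let ?y = "\<Sum>n<N. sc (a n) (e n)"
  have "ip ?y ?y = (\<Sum>n<N. a n * ip (e n) ?y)" by (simp add: ip_sum_left ip_sc_left)
  also have "\<dots> = (\<Sum>n<N. a n * cnj (a n))"
    by (rule sum.cong) (auto simp: ip_cnj[of "e _" ?y] comb_coeff)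
  also have "\<dots> = (\<Sum>n<N. complex_of_real ((cmod (a n))\<^sup>2))"
    by (simp add: complex_norm_square[symmetric])
  finally show ?thesis .
qed

lemma comb_hnorm: "hnorm ip (\<Sum>n<N. sc (a n) (e n)) = sqrt (\<Sum>n<N. (cmod (a n))\<^sup>2)"
  unfolding hnorm_def comb_norm by (simp flip: of_real_sum)

lemma bessel_fin: "(\<Sum>n<N. (cmod (ip x (e n)))\<^sup>2) \<le> (hnorm ip x)\<^sup>2"
proof -
  define c where "c n = ip x (e n)" for n
  define y where "y = (\<Sum>n<N. sc (c n) (e n))"
  define s where "s = (\<Sum>n<N. (cmod (c n))\<^sup>2)"
  have yy: "ip y y = of_real s" unfolding y_def s_def comb_norm by simp
  have yx: "ip y x = of_real s"
  proof -
    have "ip y x = (\<Sum>n<N. c n * ip (e n) x)" unfolding y_def by (simp add: ip_sum_left ip_sc_left)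
    also have "\<dots> = (\<Sum>n<N. c n * cnj (c n))" unfolding c_def by (metis ip_cnj)
    finally show ?thesis unfolding s_def by (simp add: complex_norm_square[symmetric])
  qed
  have xy: "ip x y = of_real s" using yx ip_cnj[of x y] by simp
  have "ip (x - y) (x - y) = ip x x - of_real s"
    by (simp add: ip_diff_left ip_diff_right yy yx xy)
  then have "0 \<le> Re (ip x x) - s" using ip_self_nonneg(2)[of "x - y"] by simp
  then show ?thesis unfolding hnorm_sq s_def c_def by simp
qed

lemma bessel_summable: "summable (\<lambda>n. (cmod (ip x (e n)))\<^sup>2)"
  by (rule summableI_nonneg_bounded[where x="(hnorm ip x)\<^sup>2"]) (auto intro: bessel_fin)

end
end


lemma sum_sub_le:
  fixes x :: 'h and F1 F2 :: "('h \<Rightarrow> real) set"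
  assumes "finite F2" "F1 \<subseteq> F2" "\<forall>p\<in>F2. 0 \<le> p x"
  shows "(\<Sum>p\<in>F1. p x) \<le> (\<Sum>p\<in>F2. p x)"
  by (rule sum_mono2) (use assms in auto)

lemma dual_bound_abs:
  fixes c C s :: real
  assumes "c \<le> C * s" "0 \<le> s" shows "c \<le> \<bar>C\<bar> * s"
  using assms by (smt (verit) mult_right_mono abs_ge_self)

lemma dual_zero: "(\<lambda>\<eta>. 0) \<in> dualx sc D S"
  unfolding dualx_def by (auto intro!: exI[of _ "{}"])

lemma dual_add:
  assumes P: "\<Phi> \<in> dualx sc D S" and Q: "\<Psi> \<in> dualx sc D S" and nn: "\<forall>p\<in>S. \<forall>x\<in>D. 0 \<le> p x"
  shows "(\<lambda>\<eta>. \<Phi> \<eta> + \<Psi> \<eta>) \<in> dualx sc D S"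
proof -
  obtain F1 C1 where F1: "F1 \<subseteq> S" "finite F1" "\<forall>x\<in>D. cmod (\<Phi> x) \<le> C1 * (\<Sum>p\<in>F1. p x)"
    using P unfolding dualx_def by blast
  obtain F2 C2 where F2: "F2 \<subseteq> S" "finite F2" "\<forall>x\<in>D. cmod (\<Psi> x) \<le> C2 * (\<Sum>p\<in>F2. p x)"
    using Q unfolding dualx_def by blast
  have bnd: "cmod (\<Phi> x + \<Psi> x) \<le> (\<bar>C1\<bar> + \<bar>C2\<bar>) * (\<Sum>p\<in>F1 \<union> F2. p x)" if x: "x \<in> D" for x
  proof -
    have n1: "0 \<le> (\<Sum>p\<in>F1. p x)" "0 \<le> (\<Sum>p\<in>F2. p x)" using F1 F2 nn x by (auto intro!: sum_nonneg)
    have s1: "(\<Sum>p\<in>F1. p x) \<le> (\<Sum>p\<in>F1 \<union> F2. p x)" "(\<Sum>p\<in>F2. p x) \<le> (\<Sum>p\<in>F1 \<union> F2. p x)"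
      using F1 F2 nn x by (auto intro!: sum_sub_le)
    have "cmod (\<Phi> x + \<Psi> x) \<le> cmod (\<Phi> x) + cmod (\<Psi> x)" by (rule norm_triangle_ineq)
    also have "\<dots> \<le> \<bar>C1\<bar> * (\<Sum>p\<in>F1. p x) + \<bar>C2\<bar> * (\<Sum>p\<in>F2. p x)"
      using dual_bound_abs[OF F1(3)[rule_format, OF x] n1(1)] dual_bound_abs[OF F2(3)[rule_format, OF x] n1(2)]
      by linarith
    also have "\<dots> \<le> \<bar>C1\<bar> * (\<Sum>p\<in>F1 \<union> F2. p x) + \<bar>C2\<bar> * (\<Sum>p\<in>F1 \<union> F2. p x)"
      using s1 by (intro add_mono mult_left_mono) auto
    finally show ?thesis by (simp add: algebra_simps)
  qed
  have ex: "\<exists>F C. F \<subseteq> S \<and> finite F \<and> (\<forall>x\<in>D. cmod (\<Phi> x + \<Psi> x) \<le> C * (\<Sum>p\<in>F. p x))"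
    using F1 F2 bnd by (intro exI[of _ "F1 \<union> F2"] exI[of _ "\<bar>C1\<bar> + \<bar>C2\<bar>"]) auto
  show ?thesis unfolding dualx_def mem_Collect_eq
  proof (intro conjI)
    show "\<exists>F C. F \<subseteq> S \<and> finite F \<and> (\<forall>x\<in>D. cmod (\<Phi> x + \<Psi> x) \<le> C * (\<Sum>p\<in>F. p x))" by (rule ex)
  qed (use P Q in \<open>auto simp: dualx_def algebra_simps\<close>)
qed

lemma dual_scale:
  assumes P: "\<Phi> \<in> dualx sc D S"
  shows "(\<lambda>\<eta>. a * \<Phi> \<eta>) \<in> dualx sc D S"
proof -
  obtain F C where F: "F \<subseteq> S" "finite F" "\<forall>x\<in>D. cmod (\<Phi> x) \<le> C * (\<Sum>p\<in>F. p x)"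
    using P unfolding dualx_def by blast
  have "cmod (a * \<Phi> x) \<le> (cmod a * C) * (\<Sum>p\<in>F. p x)" if "x \<in> D" for x
    using F(3) that by (simp add: norm_mult mult.assoc mult_left_mono)
  then have ex: "\<exists>F C. F \<subseteq> S \<and> finite F \<and> (\<forall>x\<in>D. cmod (a * \<Phi> x) \<le> C * (\<Sum>p\<in>F. p x))"
    using F by blast
  show ?thesis unfolding dualx_def mem_Collect_eq
  proof (intro conjI)
    show "\<exists>F C. F \<subseteq> S \<and> finite F \<and> (\<forall>x\<in>D. cmod (a * \<Phi> x) \<le> C * (\<Sum>p\<in>F. p x))" by (rule ex)
  qed (use P in \<open>auto simp: dualx_def algebra_simps\<close>)
qed

lemma dual_lincomb:
  fixes \<zeta> :: "nat \<Rightarrow> 'h::ab_group_add \<Rightarrow> complex" and N :: nat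
  assumes "\<forall>k. \<zeta> k \<in> dualx sc D S" "\<forall>p\<in>S. \<forall>x\<in>D. 0 \<le> p x"
  shows "(\<lambda>\<eta>. \<Sum>k<N. a k * \<zeta> k \<eta>) \<in> dualx sc D S"
proof (induction N)
  case 0 then show ?case using dual_zero by simp
next
  case (Suc N)
  have "(\<lambda>\<eta>. (\<Sum>k<N. a k * \<zeta> k \<eta>) + a N * \<zeta> N \<eta>) \<in> dualx sc D S"
    by (rule dual_add[OF Suc dual_scale]) (use assms in auto)
  then show ?case by simp
qed

lemma dual_bdd:
  assumes P: "\<Phi> \<in> dualx sc D S" and M: "bnd D S M" and nn: "\<forall>p\<in>S. \<forall>x\<in>D. 0 \<le> p x"
  shows "\<exists>K. \<forall>\<eta>\<in>M. cmod (\<Phi> \<eta>) \<le> K"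
proof -
  obtain F C where F: "F \<subseteq> S" "finite F" "\<forall>x\<in>D. cmod (\<Phi> x) \<le> C * (\<Sum>p\<in>F. p x)"
    using P unfolding dualx_def by blast
  have "\<forall>p\<in>S. \<exists>c. \<forall>x\<in>M. p x \<le> c" using M unfolding bnd_def by blast
  then obtain c where c: "\<forall>p\<in>S. \<forall>x\<in>M. p x \<le> c p" by metis
  have MD: "M \<subseteq> D" using M unfolding bnd_def by blast
  have "cmod (\<Phi> \<eta>) \<le> \<bar>C\<bar> * (\<Sum>p\<in>F. c p)" if "\<eta> \<in> M" for \<eta>
  proof -
    have x: "\<eta> \<in> D" using MD that by blast
    have n: "0 \<le> (\<Sum>p\<in>F. p \<eta>)" using F nn x by (auto intro!: sum_nonneg)
    have "cmod (\<Phi> \<eta>) \<le> \<bar>C\<bar> * (\<Sum>p\<in>F. p \<eta>)" by (rule dual_bound_abs[OF F(3)[rule_format, OF x] n])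
    also have "\<dots> \<le> \<bar>C\<bar> * (\<Sum>p\<in>F. c p)"
      using F c that by (intro mult_left_mono sum_mono) auto
    finally show ?thesis .
  qed
  then show ?thesis by blast
qed



context hil begin

lemma W_zero:
  fixes W :: "'h \<Rightarrow> 'h \<Rightarrow> complex"
  assumes add: "\<forall>x y. W (x + y) = (\<lambda>\<eta>. W x \<eta> + W y \<eta>)"
  shows "W 0 \<eta> = 0"
proof -
  have "W 0 \<eta> = W 0 \<eta> + W 0 \<eta>" using fun_cong[OF add[rule_format, of 0 0], of \<eta>] by (subst (asm) add_0_left)
  then show ?thesis by (rule add_cancel_right_right[THEN iffD1])
qed

lemma W_sum:
  fixes W :: "'h \<Rightarrow> 'h \<Rightarrow> complex" and N :: nat
  assumes add: "\<forall>x y. W (x + y) = (\<lambda>\<eta>. W x \<eta> + W y \<eta>)"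
    and hom: "\<forall>a x. W (sc a x) = (\<lambda>\<eta>. a * W x \<eta>)"
  shows "W (\<Sum>k<N. sc (a k) (e k)) \<eta> = (\<Sum>k<N. a k * W (e k) \<eta>)"
  by (induction N) (simp_all add: W_zero[OF add] add hom)

lemma dir2:
  assumes ortho: "\<forall>i j. ip (e i) (e j) = (if i = j then 1 else 0)"
    and nn: "\<forall>p\<in>S. \<forall>x\<in>D. 0 \<le> p x"
    and CH: "CHext sc ip D S X W" and We: "\<forall>n. W (e n) = \<zeta> n"
  shows "bessel_like D S \<zeta>"
  unfolding bessel_like_def
proof (intro allI impI)
  fix M assume M: "bnd D S M"
  show "\<exists>B. \<forall>\<eta>\<in>M. summable (\<lambda>k. (cmod (\<zeta> k \<eta>))\<^sup>2) \<and> (\<Sum>k. (cmod (\<zeta> k \<eta>))\<^sup>2) \<le> B"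
  proof (cases "M = {}")
    case True then show ?thesis by blast
  next
    case False
    define q where "q = (\<lambda>\<Phi>::'h \<Rightarrow> complex. SUP \<eta>\<in>M. cmod (\<Phi> \<eta>))"
    have "q \<in> strong_sn D S" unfolding strong_sn_def q_def using M False by blast
    then obtain C where C: "\<forall>x. q (W x) \<le> C * hnorm ip x" using CH unfolding CHext_def by blast
    have add: "\<forall>x y. W (x + y) = (\<lambda>\<eta>. W x \<eta> + W y \<eta>)"
      and hom: "\<forall>a x. W (sc a x) = (\<lambda>\<eta>. a * W x \<eta>)"
      and dual: "\<forall>x. W x \<in> dualx sc D S" using CH unfolding CHext_def by blast+
    have part: "(\<Sum>k<N. (cmod (\<zeta> k \<eta>))\<^sup>2) \<le> C\<^sup>2" if eta: "\<eta> \<in> M" for \<eta> N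
    proof -
      define s where "s = (\<Sum>k<N. (cmod (\<zeta> k \<eta>))\<^sup>2)"
      define x where "x = (\<Sum>k<N. sc (cnj (\<zeta> k \<eta>)) (e k))"
      have "W x \<eta> = (\<Sum>k<N. cnj (\<zeta> k \<eta>) * \<zeta> k \<eta>)"
        unfolding x_def W_sum[OF add hom] using We by simp
      also have "\<dots> = of_real s" unfolding s_def
        by (simp add: complex_norm_square[symmetric] mult.commute)
      finally have Wx: "W x \<eta> = of_real s" .
      have hx: "hnorm ip x = sqrt s" unfolding x_def s_def comb_hnorm[OF ortho] by simp
      obtain K where K: "\<forall>\<eta>\<in>M. cmod (W x \<eta>) \<le> K" using dual_bdd[OF dual[rule_format] M nn] by blast
      have "cmod (W x \<eta>) \<le> q (W x)" unfolding q_def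
        by (rule cSUP_upper[OF eta]) (use K in \<open>auto intro!: bdd_aboveI2\<close>)
      also have "\<dots> \<le> C * sqrt s" using C hx by metis
      finally have le0: "cmod (W x \<eta>) \<le> C * sqrt s" .
      have s0: "0 \<le> s" unfolding s_def by (auto intro!: sum_nonneg)
      have "cmod (W x \<eta>) = s" using Wx s0 by simp
      with le0 have le: "s \<le> C * sqrt s" by simp
      show ?thesis
      proof (cases "s = 0")
        case True then show ?thesis unfolding s_def by simp
      next
        case False
        then have "0 < sqrt s" using s0 by simp
        moreover have "sqrt s * sqrt s \<le> C * sqrt s" using le s0 by simp
        ultimately have "sqrt s \<le> C" by (rule mult_right_le_imp_le[rotated])
        then have "(sqrt s)\<^sup>2 \<le> C\<^sup>2" using s0 by (intro power_mono) auto
        then show ?thesis using s0 unfolding s_def by simp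
      qed
    qed
    have "\<forall>\<eta>\<in>M. summable (\<lambda>k. (cmod (\<zeta> k \<eta>))\<^sup>2) \<and> (\<Sum>k. (cmod (\<zeta> k \<eta>))\<^sup>2) \<le> C\<^sup>2"
    proof
      fix \<eta> assume eta: "\<eta> \<in> M"
      have sm: "summable (\<lambda>k. (cmod (\<zeta> k \<eta>))\<^sup>2)"
        by (rule summableI_nonneg_bounded[where x="C\<^sup>2"]) (use part[OF eta] in auto)
      then show "summable (\<lambda>k. (cmod (\<zeta> k \<eta>))\<^sup>2) \<and> (\<Sum>k. (cmod (\<zeta> k \<eta>))\<^sup>2) \<le> C\<^sup>2"
        using suminf_le_const[OF sm part[OF eta]] by simp
    qed
    then show ?thesis by blast
  qed
qed

end


lemma cmod_mult_le_sq: "cmod (a * b) \<le> ((cmod a)\<^sup>2 + (cmod b)\<^sup>2) / 2"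
proof -
  have "0 \<le> (cmod a - cmod b)\<^sup>2" by simp
  then show ?thesis by (simp add: norm_mult power2_eq_square algebra_simps)
qed

lemma CS_fin:
  fixes a b :: "nat \<Rightarrow> complex"
  shows "cmod (\<Sum>n<N. a n * b n) \<le> sqrt (\<Sum>n<N. (cmod (a n))\<^sup>2) * sqrt (\<Sum>n<N. (cmod (b n))\<^sup>2)"
proof -
  have "cmod (\<Sum>n<N. a n * b n) \<le> (\<Sum>n<N. cmod (a n * b n))" by (rule norm_sum)
  also have "\<dots> = (\<Sum>n<N. \<bar>cmod (a n)\<bar> * \<bar>cmod (b n)\<bar>)" by (simp add: norm_mult)
  also have "\<dots> \<le> L2_set (\<lambda>n. cmod (a n)) {..<N} * L2_set (\<lambda>n. cmod (b n)) {..<N}"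
    by (rule L2_set_mult_ineq)
  finally show ?thesis unfolding L2_set_def by simp
qed

lemma lim_bound:
  fixes f :: "nat \<Rightarrow> complex"
  assumes "summable f" "\<And>N. cmod (\<Sum>n<N. f n) \<le> K"
  shows "cmod (suminf f) \<le> K"
proof -
  have "(\<lambda>N. cmod (\<Sum>n<N. f n)) \<longlonglongrightarrow> cmod (suminf f)"
    using summable_LIMSEQ[OF assms(1)] by (rule tendsto_norm)
  then show ?thesis by (rule LIMSEQ_le_const2) (use assms(2) in auto)
qed

context hil begin

context
  fixes e :: "nat \<Rightarrow> 'h" and \<zeta> :: "nat \<Rightarrow> 'h \<Rightarrow> complex" and D :: "'h set" and S :: "('h \<Rightarrow> real) set"
  assumes ortho: "\<forall>i j. ip (e i) (e j) = (if i = j then 1 else 0)"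
    and nn: "\<forall>p\<in>S. \<forall>x\<in>D. 0 \<le> p x"
    and bl: "bessel_like D S \<zeta>"
    and zd: "\<forall>n. \<zeta> n \<in> dualx sc D S"
begin

lemma zeta_out: "\<eta> \<notin> D \<Longrightarrow> \<zeta> n \<eta> = 0"
  using zd unfolding dualx_def by blast

lemma zeta_sq_summable: "summable (\<lambda>n. (cmod (\<zeta> n \<eta>))\<^sup>2)"
proof (cases "\<eta> \<in> D")
  case True
  have "bnd D S {\<eta>}" unfolding bnd_def using True by auto
  then show ?thesis using bl unfolding bessel_like_def by blast
next
  case False then show ?thesis by (simp add: zeta_out)
qed

lemma T_summable: "summable (\<lambda>n. ip x (e n) * \<zeta> n \<eta>)"
proof (rule summable_norm_cancel, rule summable_comparison_test')
  show "summable (\<lambda>n. ((cmod (ip x (e n)))\<^sup>2 + (cmod (\<zeta> n \<eta>))\<^sup>2) / 2)"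
    using bessel_summable[OF ortho] zeta_sq_summable
    by (intro summable_divide summable_add) auto
  show "norm (norm (ip x (e n) * \<zeta> n \<eta>)) \<le> ((cmod (ip x (e n)))\<^sup>2 + (cmod (\<zeta> n \<eta>))\<^sup>2) / 2" for n
    using cmod_mult_le_sq by simp
qed

lemma coef_sqrt_le: "sqrt (\<Sum>n<N. (cmod (ip x (e n)))\<^sup>2) \<le> hnorm ip x"
proof -
  have "sqrt (\<Sum>n<N. (cmod (ip x (e n)))\<^sup>2) \<le> sqrt ((hnorm ip x)\<^sup>2)"
    using bessel_fin[OF ortho] by (rule real_sqrt_le_mono)
  then show ?thesis using hnorm_nonneg by simp
qed

lemma zeta_part_le: "(\<Sum>n<N. (cmod (\<zeta> n \<eta>))\<^sup>2) \<le> (\<Sum>n. (cmod (\<zeta> n \<eta>))\<^sup>2)"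
  by (rule sum_le_suminf[OF zeta_sq_summable]) auto

lemma W_bound: "cmod (\<Sum>n. ip x (e n) * \<zeta> n \<eta>) \<le> hnorm ip x * sqrt (\<Sum>n. (cmod (\<zeta> n \<eta>))\<^sup>2)"
proof (rule lim_bound[OF T_summable])
  fix N
  have "cmod (\<Sum>n<N. ip x (e n) * \<zeta> n \<eta>) \<le> sqrt (\<Sum>n<N. (cmod (ip x (e n)))\<^sup>2) * sqrt (\<Sum>n<N. (cmod (\<zeta> n \<eta>))\<^sup>2)"
    by (rule CS_fin)
  also have "\<dots> \<le> hnorm ip x * sqrt (\<Sum>n. (cmod (\<zeta> n \<eta>))\<^sup>2)"
    using coef_sqrt_le zeta_part_le hnorm_nonneg by (intro mult_mono) (auto intro: sum_nonneg)
  finally show "cmod (\<Sum>n<N. ip x (e n) * \<zeta> n \<eta>) \<le> hnorm ip x * sqrt (\<Sum>n. (cmod (\<zeta> n \<eta>))\<^sup>2)" .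
qed

lemma q_bound:
  assumes "q \<in> strong_sn D S"
  shows "\<exists>K\<ge>0. \<forall>x. q (\<lambda>\<eta>. \<Sum>n. ip x (e n) * \<zeta> n \<eta>) \<le> K * hnorm ip x"
proof -
  obtain M where M: "bnd D S M" "M \<noteq> {}" and q: "q = (\<lambda>\<Phi>. SUP \<eta>\<in>M. cmod (\<Phi> \<eta>))"
    using assms unfolding strong_sn_def by blast
  obtain K where K: "\<forall>\<eta>\<in>M. summable (\<lambda>k. (cmod (\<zeta> k \<eta>))\<^sup>2) \<and> (\<Sum>k. (cmod (\<zeta> k \<eta>))\<^sup>2) \<le> K"
    using bl[unfolded bessel_like_def, rule_format, OF M(1)] by blast
  obtain \<eta>0 where e0: "\<eta>0 \<in> M" using M by blast
  have K0: "0 \<le> K" using K e0 suminf_nonneg[OF zeta_sq_summable[of \<eta>0]] by fastforce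
  have "q (\<lambda>\<eta>. \<Sum>n. ip x (e n) * \<zeta> n \<eta>) \<le> sqrt K * hnorm ip x" for x
    unfolding q
  proof (rule cSUP_least[OF M(2)])
    fix \<eta> assume "\<eta> \<in> M"
    then have "sqrt (\<Sum>n. (cmod (\<zeta> n \<eta>))\<^sup>2) \<le> sqrt K" using K by simp
    then have "hnorm ip x * sqrt (\<Sum>n. (cmod (\<zeta> n \<eta>))\<^sup>2) \<le> hnorm ip x * sqrt K"
      using hnorm_nonneg by (rule mult_left_mono)
    then show "cmod (\<Sum>n. ip x (e n) * \<zeta> n \<eta>) \<le> sqrt K * hnorm ip x"
      using W_bound[of x \<eta>] by (simp add: mult.commute)
  qed
  then show ?thesis using K0 by (intro exI[of _ "sqrt K"]) auto
qed

lemma W_cont: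
  assumes refl: "reflexive_lcs sc D S"
  shows "\<exists>F C. F \<subseteq> S \<and> finite F \<and>
           (\<forall>x \<eta>. \<eta> \<in> D \<longrightarrow> cmod (\<Sum>n. ip x (e n) * \<zeta> n \<eta>) \<le> hnorm ip x * (C * (\<Sum>p\<in>F. p \<eta>)))"
proof -
  define B where "B = {\<Phi>. \<exists>N a. (\<Sum>n<N. (cmod (a n))\<^sup>2) \<le> 1 \<and> \<Phi> = (\<lambda>\<eta>. \<Sum>n<N. a n * \<zeta> n \<eta>)}"
  have Bsub: "B \<subseteq> dualx sc D S" unfolding B_def using dual_lincomb[OF zd nn] by blast
  have "(\<lambda>\<eta>. 0) \<in> B" unfolding B_def by (auto intro!: exI[of _ 0])
  then have Bne: "B \<noteq> {}" by blast
  have Bpt: "cmod (\<Phi> \<eta>) \<le> sqrt (\<Sum>n. (cmod (\<zeta> n \<eta>))\<^sup>2)" if PB: "\<Phi> \<in> B" for \<Phi> \<eta>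
  proof -
    obtain N a where a: "(\<Sum>n<N. (cmod (a n))\<^sup>2) \<le> 1" and P: "\<Phi> = (\<lambda>\<eta>. \<Sum>n<N. a n * \<zeta> n \<eta>)"
      using PB unfolding B_def by blast
    have "cmod (\<Phi> \<eta>) \<le> sqrt (\<Sum>n<N. (cmod (a n))\<^sup>2) * sqrt (\<Sum>n<N. (cmod (\<zeta> n \<eta>))\<^sup>2)"
      unfolding P by (rule CS_fin)
    also have "\<dots> \<le> 1 * sqrt (\<Sum>n. (cmod (\<zeta> n \<eta>))\<^sup>2)"
      using a zeta_part_le by (intro mult_mono) (auto intro: sum_nonneg)
    finally show ?thesis by simp
  qed
  have Bbd: "bnd_dual sc D S B" unfolding bnd_dual_def
  proof (intro conjI ballI)
    show "B \<subseteq> dualx sc D S" by (rule Bsub)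
    fix q assume "q \<in> strong_sn D S"
    then obtain M where M: "bnd D S M" "M \<noteq> {}" and q: "q = (\<lambda>\<Phi>. SUP \<eta>\<in>M. cmod (\<Phi> \<eta>))"
      unfolding strong_sn_def by blast
    obtain K where K: "\<forall>\<eta>\<in>M. summable (\<lambda>k. (cmod (\<zeta> k \<eta>))\<^sup>2) \<and> (\<Sum>k. (cmod (\<zeta> k \<eta>))\<^sup>2) \<le> K"
      using bl[unfolded bessel_like_def, rule_format, OF M(1)] by blast
    have "q \<Phi> \<le> sqrt K" if "\<Phi> \<in> B" for \<Phi>
      unfolding q
    proof (rule cSUP_least[OF M(2)])
      fix \<eta> assume "\<eta> \<in> M"
      then have "sqrt (\<Sum>n. (cmod (\<zeta> n \<eta>))\<^sup>2) \<le> sqrt K" using K by simp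
      then show "cmod (\<Phi> \<eta>) \<le> sqrt K" using Bpt[OF that, of \<eta>] by linarith
    qed
    then show "\<exists>C. \<forall>\<Phi>\<in>B. q \<Phi> \<le> C" by blast
  qed
  define r where "r = (\<lambda>\<eta>. SUP \<Phi>\<in>B. cmod (\<Phi> \<eta>))"
  define R where "R = {(\<lambda>\<eta>. SUP \<Phi>\<in>B. cmod (\<Phi> \<eta>)) | B. bnd_dual sc D S B \<and> B \<noteq> {}}"
  have "let R = {(\<lambda>\<eta>. SUP \<Phi>\<in>B. cmod (\<Phi> \<eta>)) | B. bnd_dual sc D S B \<and> B \<noteq> {}} in
        (\<forall>p\<in>S. \<exists>Q C. Q \<subseteq> R \<and> finite Q \<and> (\<forall>x\<in>D. p x \<le> C * (\<Sum>r\<in>Q. r x))) \<and>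
        (\<forall>r\<in>R. \<exists>F C. F \<subseteq> S \<and> finite F \<and> (\<forall>x\<in>D. r x \<le> C * (\<Sum>p\<in>F. p x)))"
    using refl unfolding reflexive_lcs_def by (rule conjunct2)
  then have RR: "\<forall>r\<in>R. \<exists>F C. F \<subseteq> S \<and> finite F \<and> (\<forall>x\<in>D. r x \<le> C * (\<Sum>p\<in>F. p x))"
    unfolding Let_def R_def by (rule conjunct2)
  have rR: "r \<in> R" unfolding r_def R_def using Bbd Bne by blast
  obtain F C where F: "F \<subseteq> S" "finite F" "\<forall>x\<in>D. r x \<le> C * (\<Sum>p\<in>F. p x)"
    using bspec[OF RR rR] by blast
  have rge: "cmod (\<Phi> \<eta>) \<le> r \<eta>" if "\<Phi> \<in> B" for \<Phi> \<eta>
    unfolding r_def by (rule cSUP_upper[OF that]) (use Bpt in \<open>auto intro!: bdd_aboveI2\<close>)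
  have main: "cmod (\<Sum>n. ip x (e n) * \<zeta> n \<eta>) \<le> hnorm ip x * r \<eta>" for x \<eta>
  proof (cases "hnorm ip x = 0")
    case True
    then have "x = 0" by (rule hnorm_zero)
    then show ?thesis using True by simp
  next
    case False
    define h where "h = hnorm ip x"
    have h0: "0 < h" using False hnorm_nonneg[of x] unfolding h_def by simp
    show ?thesis
    proof (rule lim_bound[OF T_summable])
      fix N
      define a where "a n = ip x (e n) / of_real h" for n
      have "(\<Sum>n<N. (cmod (a n))\<^sup>2) = (\<Sum>n<N. (cmod (ip x (e n)))\<^sup>2) / h\<^sup>2"
        unfolding a_def using h0 by (simp add: norm_divide power_divide sum_divide_distrib)
      also have "\<dots> \<le> 1" using bessel_fin[OF ortho, where N=N and x=x] h0 unfolding h_def by simp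
      finally have "(\<lambda>\<eta>. \<Sum>n<N. a n * \<zeta> n \<eta>) \<in> B" unfolding B_def by blast
      then have le: "cmod (\<Sum>n<N. a n * \<zeta> n \<eta>) \<le> r \<eta>" using rge by fastforce
      have "(\<Sum>n<N. ip x (e n) * \<zeta> n \<eta>) = of_real h * (\<Sum>n<N. a n * \<zeta> n \<eta>)"
        unfolding a_def using h0 by (simp add: sum_distrib_left)
      then have "cmod (\<Sum>n<N. ip x (e n) * \<zeta> n \<eta>) = h * cmod (\<Sum>n<N. a n * \<zeta> n \<eta>)"
        using h0 by (simp add: norm_mult)
      also have "\<dots> \<le> h * r \<eta>" using le h0 by simp
      finally show "cmod (\<Sum>n<N. ip x (e n) * \<zeta> n \<eta>) \<le> hnorm ip x * r \<eta>" unfolding h_def .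
    qed
  qed
  have "cmod (\<Sum>n. ip x (e n) * \<zeta> n \<eta>) \<le> hnorm ip x * (C * (\<Sum>p\<in>F. p \<eta>))" if "\<eta> \<in> D" for x \<eta>
  proof -
    have "hnorm ip x * r \<eta> \<le> hnorm ip x * (C * (\<Sum>p\<in>F. p \<eta>))"
      using F(3) that hnorm_nonneg[of x] by (intro mult_left_mono) auto
    then show ?thesis using main[of x \<eta>] by linarith
  qed
  then show ?thesis using F by blast
qed

lemma dir1:
  assumes refl: "reflexive_lcs sc D S"
    and dom: "F0 \<subseteq> S" "finite F0" "\<forall>x\<in>D. hnorm ip x \<le> C0 * (\<Sum>p\<in>F0. p x)"
  shows "\<exists>X\<in>Lop sc D S. \<exists>W. CHext sc ip D S X W \<and> (\<forall>n. W (e n) = \<zeta> n)"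
proof -
  define W where "W = (\<lambda>x \<eta>. \<Sum>n. ip x (e n) * \<zeta> n \<eta>)"
  have zadd: "\<zeta> n (\<eta> + \<eta>') = \<zeta> n \<eta> + \<zeta> n \<eta>'" if "\<eta> \<in> D" "\<eta>' \<in> D" for n \<eta> \<eta>'
    using zd that unfolding dualx_def by blast
  have zsc: "\<zeta> n (sc a \<eta>) = cnj a * \<zeta> n \<eta>" if "\<eta> \<in> D" for n a \<eta>
    using zd that unfolding dualx_def by blast
  obtain F C where FC: "F \<subseteq> S" "finite F"
     "\<forall>x \<eta>. \<eta> \<in> D \<longrightarrow> cmod (\<Sum>n. ip x (e n) * \<zeta> n \<eta>) \<le> hnorm ip x * (C * (\<Sum>p\<in>F. p \<eta>))"
    using W_cont[OF refl] by blast
  have Wd: "W x \<in> dualx sc D S" for x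
    unfolding dualx_def mem_Collect_eq
  proof (intro conjI)
    show "\<forall>\<eta>. \<eta> \<notin> D \<longrightarrow> W x \<eta> = 0" unfolding W_def by (simp add: zeta_out)
    show "\<forall>\<eta>\<in>D. \<forall>\<eta>'\<in>D. W x (\<eta> + \<eta>') = W x \<eta> + W x \<eta>'"
      unfolding W_def by (simp add: zadd distrib_left suminf_add[OF T_summable T_summable])
    show "\<forall>a. \<forall>\<eta>\<in>D. W x (sc a \<eta>) = cnj a * W x \<eta>"
    proof (intro allI ballI)
      fix a \<eta> assume "\<eta> \<in> D"
      then have "W x (sc a \<eta>) = (\<Sum>n. cnj a * (ip x (e n) * \<zeta> n \<eta>))" unfolding W_def
        by (simp add: zsc mult.left_commute)
      also have "\<dots> = cnj a * W x \<eta>" unfolding W_def by (rule suminf_mult[OF T_summable])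
      finally show "W x (sc a \<eta>) = cnj a * W x \<eta>" .
    qed
    have "\<forall>\<eta>\<in>D. cmod (W x \<eta>) \<le> (hnorm ip x * C) * (\<Sum>p\<in>F. p \<eta>)"
      using FC(3) unfolding W_def by (simp add: mult.assoc)
    then show "\<exists>F C. F \<subseteq> S \<and> finite F \<and> (\<forall>\<eta>\<in>D. cmod (W x \<eta>) \<le> C * (\<Sum>p\<in>F. p \<eta>))"
      using FC(1,2) by blast
  qed
  have Wadd: "W (x + y) = (\<lambda>\<eta>. W x \<eta> + W y \<eta>)" for x y
    unfolding W_def by (simp add: ip_add_left distrib_right suminf_add[OF T_summable T_summable])
  have Whom: "W (sc a x) = (\<lambda>\<eta>. a * W x \<eta>)" for a x
    unfolding W_def by (simp add: ip_sc_left mult.assoc suminf_mult[OF T_summable])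
  have CH: "CHext sc ip D S W W"
    unfolding CHext_def using Wd Wadd Whom q_bound unfolding W_def by blast
  have "W \<in> Lop sc D S"
    unfolding Lop_def mem_Collect_eq
  proof (intro conjI ballI allI)
    fix q assume "q \<in> strong_sn D S"
    then obtain K where K: "0 \<le> K" "\<forall>x. q (W x) \<le> K * hnorm ip x" using q_bound unfolding W_def by blast
    have "q (W x) \<le> (K * C0) * (\<Sum>p\<in>F0. p x)" if "x \<in> D" for x
    proof -
      have "K * hnorm ip x \<le> K * (C0 * (\<Sum>p\<in>F0. p x))" using dom(3) that K(1) by (intro mult_left_mono) auto
      then show ?thesis using K(2)[rule_format, of x] by (simp add: mult.assoc)
    qed
    then show "\<exists>F C. F \<subseteq> S \<and> finite F \<and> (\<forall>x\<in>D. q (W x) \<le> C * (\<Sum>p\<in>F. p x))" using dom(1,2) by blast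
  qed (use Wd Wadd Whom in auto)
  moreover have "W (e m) = \<zeta> m" for m
  proof
    fix \<eta>
    have "(\<lambda>n. ip (e m) (e n) * \<zeta> n \<eta>) = (\<lambda>n. if n = m then \<zeta> n \<eta> else 0)" using ortho by auto
    then show "W (e m) \<eta> = \<zeta> m \<eta>" unfolding W_def using sums_single[of m "\<lambda>n. \<zeta> n \<eta>"] sums_unique by metis
  qed
  ultimately show ?thesis using CH by blast
qed

end
end

theorem proposition2p13:
  fixes sc :: "complex \<Rightarrow> 'h::ab_group_add \<Rightarrow> 'h"
    and ip :: "'h \<Rightarrow> 'h \<Rightarrow> complex"
    and D :: "'h set"
    and S :: "('h \<Rightarrow> real) set"
    and \<zeta> :: "nat \<Rightarrow> ('h \<Rightarrow> complex)"
  assumes "rigged sc ip D S"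
    and "\<exists>e. onb ip e"
    and "lcs_complete D S"
    and "reflexive_lcs sc D S"
    and "\<forall>n. \<zeta> n \<in> dualx sc D S"
  shows "bessel_like D S \<zeta> \<longleftrightarrow>
         (\<forall>e. onb ip e \<longrightarrow>
            (\<exists>X\<in>Lop sc D S. \<exists>W. CHext sc ip D S X W \<and> (\<forall>n. W (e n) = \<zeta> n)))"
proof -
  have Hil: "hil sc ip" using assms(1) unfolding rigged_def hil_def by blast
  have nn: "\<forall>p\<in>S. \<forall>x\<in>D. 0 \<le> p x" using assms(1) unfolding rigged_def seminorm_on_def by blast
  obtain F0 C0 where dom: "F0 \<subseteq> S" "finite F0" "\<forall>x\<in>D. hnorm ip x \<le> C0 * (\<Sum>p\<in>F0. p x)"
    using assms(1) unfolding rigged_def by blast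
  show ?thesis
  proof
    assume bl: "bessel_like D S \<zeta>"
    show "\<forall>e. onb ip e \<longrightarrow> (\<exists>X\<in>Lop sc D S. \<exists>W. CHext sc ip D S X W \<and> (\<forall>n. W (e n) = \<zeta> n))"
    proof (intro allI impI)
      fix e assume "onb ip e"
      then have ortho: "\<forall>i j. ip (e i) (e j) = (if i = j then 1 else 0)" unfolding onb_def by blast
      show "\<exists>X\<in>Lop sc D S. \<exists>W. CHext sc ip D S X W \<and> (\<forall>n. W (e n) = \<zeta> n)"
        by (rule hil.dir1[OF Hil ortho nn bl assms(5) assms(4) dom])
    qed
  next
    assume R: "\<forall>e. onb ip e \<longrightarrow> (\<exists>X\<in>Lop sc D S. \<exists>W. CHext sc ip D S X W \<and> (\<forall>n. W (e n) = \<zeta> n))"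
    obtain e where e: "onb ip e" using assms(2) by blast
    then have ortho: "\<forall>i j. ip (e i) (e j) = (if i = j then 1 else 0)" unfolding onb_def by blast
    obtain X W where "CHext sc ip D S X W" "\<forall>n. W (e n) = \<zeta> n" using R e by blast
    then show "bessel_like D S \<zeta>" by (rule hil.dir2[OF Hil ortho nn])
  qed
qed

end
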